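(* Let $d\geq 4$ be an integer and let $\mathcal{X}\subset\mathbb{R}^{d+1}$ be the set of all vectors obtained by permuting the coordinates of $(1,1,-1,0,\dots,0)^T\in\mathbb{R}^{d+1}$. Then $\mathcal{X}$ lies in the affine hyperplane $\{x\in\mathbb{R}^{d+1}\colon x_1+\dots+x_{d+1}=1\}$ (which is isometric to $\mathbb{R}^d$), and, viewed as a subset of $\mathbb{R}^d$ via this isometry, $\mathcal{X}$ is a $5$-distance set with exactly $(d-1)\binom{d+1}{2}$ elements.
   Context: For a finite set $\mathcal{X}$ of distinct vectors in a Euclidean space, $\mathcal{X}$ is called an $s$-distance set if the set of Euclidean distances between distinct elements of $\mathcal{X}$ has exactly $s$ elements. *)

theory Defs
  imports "HOL-Analysis.Analysis" "HOL-Combinatorics.Permutations"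
begin

text \<open>Vectors of R^n are represented as functions nat => real, coordinates
  indexed by 0..n-1 (coordinates outside are irrelevant; for our sets they are 0).\<close>

definition eucl_dist :: "nat \<Rightarrow> (nat \<Rightarrow> real) \<Rightarrow> (nat \<Rightarrow> real) \<Rightarrow> real" where
  "eucl_dist n x y = sqrt (\<Sum>i<n. (x i - y i)^2)"

definition distances :: "nat \<Rightarrow> (nat \<Rightarrow> real) set \<Rightarrow> real set" where
  "distances n X = {eucl_dist n x y | x y. x \<in> X \<and> y \<in> X \<and> x \<noteq> y}"

definition is_s_distance_set :: "nat \<Rightarrow> nat \<Rightarrow> (nat \<Rightarrow> real) set \<Rightarrow> bool" where
  "is_s_distance_set n s X \<longleftrightarrow> finite X \<and> card (distances n X) = s"

definition base_vec :: "nat \<Rightarrow> real" where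
  "base_vec i = (if i < 2 then 1 else if i = 2 then -1 else 0)"

definition perm_set :: "nat \<Rightarrow> (nat \<Rightarrow> real) set" where
  "perm_set n = {(\<lambda>i. base_vec (p i)) | p. p permutes {0..<n}}"

end

theory Submission
  imports Defs
begin

definition ev :: "nat \<Rightarrow> nat \<Rightarrow> real" where
  "ev u i = (if i = u then 1 else 0)"

definition vec :: "nat \<Rightarrow> nat \<Rightarrow> nat \<Rightarrow> nat \<Rightarrow> real" where
  "vec a b c i = ev a i + ev b i - ev c i"

lemma exists_perm:
  assumes "a < (n::nat)" "b < n" "c < n" "a \<noteq> b" "a \<noteq> c" "b \<noteq> c"
  shows "\<exists>p. p permutes {0..<n} \<and> p a = 0 \<and> p b = 1 \<and> p c = 2"
proof -
  define L where "L = [a,b,c] @ filter (\<lambda>i. i \<notin> {a,b,c}) [0..<n]"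
  have dL: "distinct L" using assms by (simp add: L_def)
  have sL: "set L = {0..<n}" using assms by (auto simp: L_def)
  have lL: "length L = n"
    using distinct_card[OF dL] sL by simp
  define q where "q i = (if i < n then L ! i else i)" for i
  have "bij_betw ((!) L) {..<length L} (set L)" by (rule bij_betw_nth[OF dL]) auto
  hence "bij_betw q {0..<n} {0..<n}"
    using lL sL by (auto simp: q_def lessThan_atLeast0 intro: bij_betw_cong[THEN iffD1])
  hence qp: "q permutes {0..<n}" by (rule bij_imp_permutes) (simp add: q_def)
  have "n \<ge> 3" using assms by auto
  hence q0: "q 0 = a" "q 1 = b" "q 2 = c" by (auto simp: q_def L_def nth_append)
  have "inv q permutes {0..<n}" using permutes_inv[OF qp] .
  moreover have "inv q a = 0" "inv q b = 1" "inv q c = 2"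
    using q0 permutes_inv_eq[OF qp] by auto
  ultimately show ?thesis by blast
qed

definition VS :: "nat \<Rightarrow> (nat \<Rightarrow> real) set" where
  "VS n = {vec a b c | a b c. a < b \<and> b < n \<and> c < n \<and> c \<noteq> a \<and> c \<noteq> b}"

lemma vec_sym: "vec a b c = vec b a c"
  by (auto simp: vec_def fun_eq_iff)

lemma perm_set_eq:
  assumes "n \<ge> 3"
  shows "perm_set n = VS n"
proof
  show "perm_set n \<subseteq> VS n"
  proof
    fix x assume "x \<in> perm_set n"
    then obtain p where p: "p permutes {0..<n}" and x: "x = (\<lambda>i. base_vec (p i))"
      by (auto simp: perm_set_def)
    have ip: "inv p permutes {0..<n}" using permutes_inv[OF p] .
    define a where "a = inv p 0"
    define b where "b = inv p 1"
    define c where "c = inv p 2"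
    have lt: "a < n" "b < n" "c < n"
      using permutes_in_image[OF ip] assms by (auto simp: a_def b_def c_def)
    have eq: "p i = 0 \<longleftrightarrow> i = a" "p i = 1 \<longleftrightarrow> i = b" "p i = 2 \<longleftrightarrow> i = c" for i
      using permutes_inv_eq[OF p, of _ i] by (metis a_def b_def c_def)+
    have dist: "a \<noteq> b" "a \<noteq> c" "b \<noteq> c" using eq[of a] eq[of b] by auto
    have xv: "x = vec a b c"
    proof
      fix i
      have "p i < 2 \<longleftrightarrow> p i = 0 \<or> p i = 1" by auto
      then show "x i = vec a b c i"
        using eq[of i] dist by (auto simp: x base_vec_def vec_def ev_def)
    qed
    show "x \<in> VS n"
    proof (cases "a < b")
      case True thus ?thesis using lt dist xv unfolding VS_def by blast
    next
      case False
      hence "b < a" using dist by auto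
      thus ?thesis using lt dist xv vec_sym[of a b c] unfolding VS_def by blast
    qed
  qed
next
  show "VS n \<subseteq> perm_set n"
  proof
    fix x assume "x \<in> VS n"
    then obtain a b c where x: "x = vec a b c" and h: "a < b" "b < n" "c < n" "c \<noteq> a" "c \<noteq> b"
      by (auto simp: VS_def)
    obtain p where p: "p permutes {0..<n}" "p a = 0" "p b = 1" "p c = 2"
      using exists_perm[of a n b c] h by auto
    have inj: "p i = p j \<longleftrightarrow> i = j" for i j using permutes_inj[OF p(1)] by (auto dest: injD)
    have "x = (\<lambda>i. base_vec (p i))"
    proof
      fix i
      have "p i < 2 \<longleftrightarrow> p i = 0 \<or> p i = 1" by auto
      then show "x i = base_vec (p i)"
        using inj[of i a] inj[of i b] inj[of i c] p h by (auto simp: x base_vec_def vec_def ev_def)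
    qed
    thus "x \<in> perm_set n" using p(1) by (auto simp: perm_set_def)
  qed
qed

lemma vec_sum:
  assumes "a < n" "b < n" "c < n" "a \<noteq> b" "a \<noteq> c" "b \<noteq> c"
  shows "(\<Sum>i<n. vec a b c i) = 1"
  using assms by (simp add: vec_def ev_def sum.distrib sum_subtractf)

definition I :: "nat \<Rightarrow> nat \<Rightarrow> int" where "I u v = (if u = v then 1 else 0)"

abbreviation Ir :: "nat \<Rightarrow> nat \<Rightarrow> real" where "Ir u v \<equiv> real_of_int (I u v)"

lemma ev_sq: "ev u i * ev v i = Ir u v * ev u i"
  by (simp add: ev_def I_def)

lemma vec_sq:
  assumes "a \<noteq> b" "a \<noteq> c" "b \<noteq> c"
  shows "(vec a b c i)^2 = ev a i + ev b i + ev c i"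
  using assms by (simp add: vec_def ev_def)

lemma vec_dist:
  assumes "a < n" "b < n" "c < n" "a \<noteq> b" "a \<noteq> c" "b \<noteq> c"
    "a' < n" "b' < n" "c' < n" "a' \<noteq> b'" "a' \<noteq> c'" "b' \<noteq> c'"
  shows "(\<Sum>i<n. (vec a b c i - vec a' b' c' i)^2) = 6 - 2 *
     real_of_int (I a a' + I a b' - I a c' + I b a' + I b b' - I b c' - I c a' - I c b' + I c c')"
proof -
  have pw: "(vec a b c i - vec a' b' c' i)^2 = ev a i + ev b i + ev c i + ev a' i + ev b' i + ev c' i
     - 2 * (Ir a a' * ev a i + Ir a b' * ev a i - Ir a c' * ev a i + Ir b a' * ev b i + Ir b b' * ev b i
       - Ir b c' * ev b i - Ir c a' * ev c i - Ir c b' * ev c i + Ir c c' * ev c i)" for i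
  proof -
    have "(vec a b c i - vec a' b' c' i)^2 = (vec a b c i)^2 + (vec a' b' c' i)^2 - 2 * (vec a b c i * vec a' b' c' i)"
      by (simp add: power2_eq_square algebra_simps)
    also have "vec a b c i * vec a' b' c' i = ev a i * ev a' i + ev a i * ev b' i - ev a i * ev c' i
       + ev b i * ev a' i + ev b i * ev b' i - ev b i * ev c' i
       - ev c i * ev a' i - ev c i * ev b' i + ev c i * ev c' i"
      by (simp add: vec_def algebra_simps)
    finally show ?thesis by (simp only: vec_sq[OF assms(4-6)] vec_sq[OF assms(10-12)] ev_sq)
  qed
  have es: "(\<Sum>i<n. ev u i) = 1" if "u < n" for u using that by (simp add: ev_def)
  show ?thesis
    unfolding pw using assms
    by (simp add: sum.distrib sum_subtractf sum_distrib_left[symmetric] es)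
qed

lemma abs9:
  fixes p q r s t u v w z :: int
  assumes "0 \<le> p" "0 \<le> q" "0 \<le> r" "0 \<le> s" "0 \<le> t" "0 \<le> u" "0 \<le> v" "0 \<le> w" "0 \<le> z"
   "p + q + r \<le> 1" "s + t + u \<le> 1" "v + w + z \<le> 1"
   "p + s + v \<le> 1" "q + t + w \<le> 1" "r + u + z \<le> 1"
   "\<not> (p = 1 \<and> t = 1 \<and> z = 1)" "\<not> (q = 1 \<and> s = 1)"
  shows "p + q - r + s + t - u - v - w + z \<in> {2,1,0,-1,-2}"
proof -
  have lo: "p + q - r + s + t - u - v - w + z \<ge> -2" using assms by linarith
  have hi: "p + q - r + s + t - u - v - w + z \<le> 2"
  proof (cases "z = 1")
    case False
    then have "z = 0" using assms by linarith
    then show ?thesis using assms by linarith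
  next
    case True
    show ?thesis
    proof (cases "p = 1")
      case True
      then have "t \<noteq> 1" using assms \<open>z = 1\<close> by blast
      then have "t = 0" using assms by linarith
      then show ?thesis using assms True by linarith
    next
      case False
      then have "p = 0" using assms by linarith
      show ?thesis
      proof (cases "q = 1")
        case True
        then have "s = 0" using assms by linarith
        then show ?thesis using assms True \<open>p = 0\<close> by linarith
      next
        case False
        then have "q = 0" using assms by linarith
        then show ?thesis using assms \<open>p = 0\<close> by linarith
      qed
    qed
  qed
  from lo hi show ?thesis by auto
qed
lemma ip_vals:
  fixes a b c a' b' c' :: nat
  assumes "a < b" "c \<noteq> a" "c \<noteq> b" "a' < b'" "c' \<noteq> a'" "c' \<noteq> b'" "(a,b,c) \<noteq> (a',b',c')"
  shows "(I a a' + I a b' - I a c' + I b a' + I b b' - I b c' - I c a' - I c b' + I c c') \<in> {2,1,0,-1,-2}"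
proof (rule abs9)
  show "I a a' + I a b' + I a c' \<le> 1" "I b a' + I b b' + I b c' \<le> 1" "I c a' + I c b' + I c c' \<le> 1"
    "I a a' + I b a' + I c a' \<le> 1" "I a b' + I b b' + I c b' \<le> 1" "I a c' + I b c' + I c c' \<le> 1"
    using assms by (auto simp: I_def)
  show "\<not> (I a a' = 1 \<and> I b b' = 1 \<and> I c c' = 1)" using assms by (auto simp: I_def)
  show "\<not> (I a b' = 1 \<and> I b a' = 1)" using assms by (auto simp: I_def)
qed (auto simp: I_def)
definition P2 :: "nat \<Rightarrow> (nat \<times> nat) set" where "P2 n = {(a,b). a < b \<and> b < n}"

lemma card_P2: "card (P2 n) = n choose 2"
proof (induction n)
  case 0 thus ?case by (simp add: P2_def)
next
  case (Suc n)
  have "P2 (Suc n) = P2 n \<union> (\<lambda>a. (a,n)) ` {..<n}" by (auto simp: P2_def)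
  moreover have "finite (P2 n)" by (rule finite_subset[of _ "{..<n} \<times> {..<n}"]) (auto simp: P2_def)
  moreover have "P2 n \<inter> (\<lambda>a. (a,n)) ` {..<n} = {}" by (auto simp: P2_def)
  ultimately have "card (P2 (Suc n)) = card (P2 n) + card ((\<lambda>a. (a,n)) ` {..<n})"
    by (simp add: card_Un_disjoint)
  also have "card ((\<lambda>a. (a,n)) ` {..<n}) = n" by (simp add: card_image inj_on_def)
  finally show ?case using Suc by (simp add: numeral_2_eq_2 add.commute)
qed

definition T3 :: "nat \<Rightarrow> ((nat \<times> nat) \<times> nat) set" where
  "T3 n = Sigma (P2 n) (\<lambda>(a,b). {0..<n} - {a,b})"

definition vf :: "(nat \<times> nat) \<times> nat \<Rightarrow> nat \<Rightarrow> real" where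
  "vf t = vec (fst (fst t)) (snd (fst t)) (snd t)"

lemma T3_mem: "t \<in> T3 n \<Longrightarrow> fst (fst t) < snd (fst t) \<and> snd (fst t) < n \<and> snd t < n
   \<and> snd t \<noteq> fst (fst t) \<and> snd t \<noteq> snd (fst t)"
  by (auto simp: T3_def P2_def)

lemma VS_img: "VS n = vf ` T3 n"
proof
  show "VS n \<subseteq> vf ` T3 n"
  proof
    fix x assume "x \<in> VS n"
    then obtain a b c where x: "x = vec a b c" and h: "a < b" "b < n" "c < n" "c \<noteq> a" "c \<noteq> b"
      by (auto simp: VS_def)
    have "((a,b),c) \<in> T3 n" using h by (auto simp: T3_def P2_def)
    moreover have "x = vf ((a,b),c)" by (simp add: x vf_def)
    ultimately show "x \<in> vf ` T3 n" by blast
  qed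
next
  show "vf ` T3 n \<subseteq> VS n"
  proof
    fix x assume "x \<in> vf ` T3 n"
    then obtain t where t: "t \<in> T3 n" "x = vf t" by blast
    show "x \<in> VS n" using T3_mem[OF t(1)] t(2) unfolding VS_def vf_def by blast
  qed
qed

lemma finite_T3: "finite (T3 n)"
  by (rule finite_subset[of _ "({..<n} \<times> {..<n}) \<times> {..<n}"]) (auto simp: T3_def P2_def)

lemma card_T3: "card (T3 n) = (n - 2) * (n choose 2)"
proof -
  have fP: "finite (P2 n)" by (rule finite_subset[of _ "{..<n} \<times> {..<n}"]) (auto simp: P2_def)
  have "card (T3 n) = (\<Sum>x\<in>P2 n. card ((\<lambda>(a,b). {0..<n} - {a,b}) x))"
    unfolding T3_def by (rule card_SigmaI) (use fP in auto)
  also have "\<dots> = (\<Sum>x\<in>P2 n. n - 2)"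
  proof (rule sum.cong)
    fix x assume "x \<in> P2 n"
    then obtain a b where x: "x = (a,b)" "a < b" "b < n" by (auto simp: P2_def)
    have "card ({0..<n} - {a,b}) = n - 2"
      using x by (subst card_Diff_subset) auto
    thus "card ((\<lambda>(a,b). {0..<n} - {a,b}) x) = n - 2" using x by simp
  qed simp
  finally show ?thesis by (simp add: card_P2)
qed

lemma dist_ip:
  assumes "t \<in> T3 n" "t' \<in> T3 n" "t \<noteq> t'"
  shows "(\<Sum>i<n. (vf t i - vf t' i)^2) \<in> {2,4,6,8,10}"
proof -
  obtain a b c where t: "t = ((a,b),c)" by (metis prod.collapse)
  obtain a' b' c' where t': "t' = ((a',b'),c')" by (metis prod.collapse)
  have h: "a < b" "b < n" "c < n" "c \<noteq> a" "c \<noteq> b" using T3_mem[OF assms(1)] t by auto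
  have h': "a' < b'" "b' < n" "c' < n" "c' \<noteq> a'" "c' \<noteq> b'" using T3_mem[OF assms(2)] t' by auto
  have ne: "(a,b,c) \<noteq> (a',b',c')" using assms(3) t t' by auto
  have ip: "(I a a' + I a b' - I a c' + I b a' + I b b' - I b c' - I c a' - I c b' + I c c') \<in> {2,1,0,-1,-2}"
    by (rule ip_vals[OF h(1,4,5) h'(1,4,5) ne])
  have "(\<Sum>i<n. (vf t i - vf t' i)^2) = 6 - 2 *
     real_of_int (I a a' + I a b' - I a c' + I b a' + I b b' - I b c' - I c a' - I c b' + I c c')"
    unfolding t t' vf_def fst_conv snd_conv
    by (rule vec_dist) (use h h' in auto)
  thus ?thesis using ip by auto
qed

lemma vf_inj: "inj_on vf (T3 n)"
proof (rule inj_onI, rule ccontr)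
  fix t t' assume a: "t \<in> T3 n" "t' \<in> T3 n" "vf t = vf t'" "t \<noteq> t'"
  have "(\<Sum>i<n. (vf t i - vf t' i)^2) = 0" using a(3) by simp
  thus False using dist_ip[OF a(1,2,4)] by auto
qed

lemma wit:
  assumes "5 \<le> n" "a' < b'" "b' < n" "c' < n" "c' \<noteq> a'" "c' \<noteq> b'" "((0,1),2) \<noteq> ((a',b'),c')"
  shows "eucl_dist n (vf ((0,1),2)) (vf ((a',b'),c')) \<in> distances n (VS n)"
proof -
  have m: "((0,1),2) \<in> T3 n" "((a',b'),c') \<in> T3 n" using assms by (auto simp: T3_def P2_def)
  have "vf ((0,1),2) \<noteq> vf ((a',b'),c')" using inj_on_eq_iff[OF vf_inj m] assms(7) by blast
  thus ?thesis using m unfolding distances_def VS_img by blast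
qed

lemma ed: "eucl_dist n (vf ((a,b),c)) (vf ((a',b'),c')) = sqrt (\<Sum>i<n. (vec a b c i - vec a' b' c' i)^2)"
  by (simp add: eucl_dist_def vf_def)

lemma distances_eq:
  assumes "5 \<le> n"
  shows "distances n (VS n) = sqrt ` {2,4,6,8,10}"
proof
  show "distances n (VS n) \<subseteq> sqrt ` {2,4,6,8,10}"
  proof
    fix r assume "r \<in> distances n (VS n)"
    then obtain t t' where tt: "t \<in> T3 n" "t' \<in> T3 n" "vf t \<noteq> vf t'" "r = eucl_dist n (vf t) (vf t')"
      unfolding distances_def VS_img by blast
    hence "t \<noteq> t'" by auto
    from dist_ip[OF tt(1,2) this] tt(4) show "r \<in> sqrt ` {2,4,6,8,10}"
      by (auto simp: eucl_dist_def)
  qed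
next
  have v: "\<And>a' b' c'. a' < b' \<Longrightarrow> b' < n \<Longrightarrow> c' < n \<Longrightarrow> c' \<noteq> a' \<Longrightarrow> c' \<noteq> b' \<Longrightarrow>
     eucl_dist n (vf ((0,1),2)) (vf ((a',b'),c')) = sqrt (6 - 2 *
     real_of_int (I 0 a' + I 0 b' - I 0 c' + I 1 a' + I 1 b' - I 1 c' - I 2 a' - I 2 b' + I 2 c'))"
    unfolding ed by (subst vec_dist) (use assms in auto)
  have "sqrt 2 \<in> distances n (VS n)" using wit[of n 0 1 3] v[of 0 1 3] assms by (simp add: I_def)
  moreover have "sqrt 4 \<in> distances n (VS n)" using wit[of n 0 3 4] v[of 0 3 4] assms by (simp add: I_def)
  moreover have "sqrt 6 \<in> distances n (VS n)" using wit[of n 0 2 3] v[of 0 2 3] assms by (simp add: I_def)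
  moreover have "sqrt 8 \<in> distances n (VS n)" using wit[of n 3 4 0] v[of 3 4 0] assms by (simp add: I_def)
  moreover have "sqrt 10 \<in> distances n (VS n)" using wit[of n 2 3 0] v[of 2 3 0] assms by (simp add: I_def)
  ultimately show "sqrt ` {2,4,6,8,10} \<subseteq> distances n (VS n)" by auto
qed

theorem lemma2p2:
  fixes d :: nat
  assumes "d \<ge> 4"
  shows "(\<forall>x \<in> perm_set (d+1). (\<Sum>i<d+1. x i) = 1)
       \<and> is_s_distance_set (d+1) 5 (perm_set (d+1))
       \<and> card (perm_set (d+1)) = (d - 1) * ((d + 1) choose 2)"
proof -
  have ps: "perm_set (d+1) = VS (d+1)" by (rule perm_set_eq) (use assms in auto)
  have s: "\<forall>x \<in> perm_set (d+1). (\<Sum>i<d+1. x i) = 1"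
  proof
    fix x assume "x \<in> perm_set (d+1)"
    then obtain a b c where "x = vec a b c" "a < b" "b < d+1" "c < d+1" "c \<noteq> a" "c \<noteq> b"
      unfolding ps VS_def by blast
    thus "(\<Sum>i<d+1. x i) = 1" using vec_sum[of a "d+1" b c] by auto
  qed
  have fin: "finite (perm_set (d+1))" unfolding ps VS_img using finite_T3 by blast
  have "inj_on sqrt {2::real,4,6,8,10}" by (rule inj_onI) simp
  hence "card (sqrt ` {2::real,4,6,8,10}) = card {2::real,4,6,8,10}" by (rule card_image)
  hence "card (sqrt ` {2::real,4,6,8,10}) = 5" by simp
  hence dd: "is_s_distance_set (d+1) 5 (perm_set (d+1))"
    unfolding is_s_distance_set_def using fin ps distances_eq[of "d+1"] assms by simp
  have "card (perm_set (d+1)) = card (T3 (d+1))"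
    unfolding ps VS_img by (rule card_image[OF vf_inj])
  also have "\<dots> = (d - 1) * ((d + 1) choose 2)" by (simp add: card_T3)
  finally show ?thesis using s dd by blast
qed

end
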